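(* Let $(X,d)$ be a compact metric space and $\mathcal A\subset\mathcal K(X)$ a nonempty set with the finite union property. Then $$\underline{\mathrm{mo}}(\mathcal A,H)\ge\liminf_{\varepsilon\to0}\frac{\log B(\mathcal A,\varepsilon)}{-\log\varepsilon}.$$
   Context: $\mathcal K(X)$ is the space of nonempty closed subsets of $X$ with Hausdorff metric $H$. $\mathcal A$ has the finite union property if $B\cup C\in\mathcal A$ whenever $B,C\in\mathcal A$. $B,C\in\mathcal K(X)$ are $\varepsilon$-split if $\min\{d(x,y):x\in B,y\in C\}>\varepsilon$; $B(\mathcal A,\varepsilon)$ is the maximal number of pairwise $\varepsilon$-split elements of $\mathcal A$. $N(\mathcal A,\varepsilon)$ is the smallest cardinality of $E\subset\mathcal K(X)$ with $\mathcal A$ covered by the $H$-balls of radius $\varepsilon$ centered in $E$, and $\underline{\mathrm{mo}}(\mathcal A,H)=\liminf_{\varepsilon\to0}\frac{\log\log N(\mathcal A,\varepsilon)}{-\log\varepsilon}$. *)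

theory Defs
  imports "HOL-Analysis.Analysis"
begin

text \<open>K(X): nonempty closed subsets of X (X compact, so closed in X = closed).\<close>
definition Kset :: "'a::metric_space set \<Rightarrow> 'a set set" where
  "Kset X = {S. S \<subseteq> X \<and> S \<noteq> {} \<and> closed S}"

definition hausdorff_dist :: "'a::metric_space set \<Rightarrow> 'a set \<Rightarrow> real" where
  "hausdorff_dist S T = max (SUP x\<in>S. infdist x T) (SUP y\<in>T. infdist y S)"

definition eps_split :: "real \<Rightarrow> 'a::metric_space set \<Rightarrow> 'a set \<Rightarrow> bool" where
  "eps_split \<epsilon> B C \<longleftrightarrow> setdist B C > \<epsilon>"

definition finite_union_property :: "'a set set \<Rightarrow> bool" where
  "finite_union_property \<A> \<longleftrightarrow> (\<forall>B\<in>\<A>. \<forall>C\<in>\<A>. B \<union> C \<in> \<A>)"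

definition split_number :: "'a::metric_space set set \<Rightarrow> real \<Rightarrow> nat" where
  "split_number \<A> \<epsilon> = Sup {card \<F> | \<F>. finite \<F> \<and> \<F> \<subseteq> \<A> \<and>
      (\<forall>B\<in>\<F>. \<forall>C\<in>\<F>. B \<noteq> C \<longrightarrow> eps_split \<epsilon> B C)}"

definition covering_number :: "'a::metric_space set \<Rightarrow> 'a set set \<Rightarrow> real \<Rightarrow> nat" where
  "covering_number X \<A> \<epsilon> = Inf {card E | E. finite E \<and> E \<subseteq> Kset X \<and>
      \<A> \<subseteq> (\<Union>C\<in>E. {S. hausdorff_dist S C \<le> \<epsilon>})}"

definition lower_mo :: "'a::metric_space set \<Rightarrow> 'a set set \<Rightarrow> ereal" where
  "lower_mo X \<A> = Liminf (at_right 0)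
     (\<lambda>\<epsilon>. ereal (ln (ln (real (covering_number X \<A> \<epsilon>))) / (- ln \<epsilon>)))"

end

theory Submission
  imports Defs
begin

lemma net_exists:
  fixes X :: "'a::metric_space set"
  assumes "compact X" "r > 0"
  obtains F where "finite F" "F \<subseteq> X" "X \<subseteq> (\<Union>f\<in>F. ball f r)"
proof -
  have "X \<subseteq> (\<Union>x\<in>X. ball x r)" using assms(2) by auto
  then obtain F where "F \<subseteq> X" "finite F" "X \<subseteq> (\<Union>f\<in>F. ball f r)"
    using compactE_image[OF assms(1), of X "\<lambda>x. ball x r"] by auto
  then show ?thesis using that by blast
qed

lemma split_bound:
  fixes X :: "'a::metric_space set"
  assumes "compact X" "\<epsilon> > 0"
  shows "\<exists>M. \<forall>\<F>. \<F> \<subseteq> Kset X \<and> (\<forall>B\<in>\<F>. \<forall>C\<in>\<F>. B \<noteq> C \<longrightarrow> eps_split \<epsilon> B C)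
            \<longrightarrow> finite \<F> \<and> card \<F> \<le> M"
proof -
  obtain F where F: "finite F" "F \<subseteq> X" "X \<subseteq> (\<Union>f\<in>F. ball f (\<epsilon>/2))"
    using net_exists[OF assms(1), of "\<epsilon>/2"] assms(2) by auto
  show ?thesis
  proof (intro exI allI impI)
    fix \<F> assume H: "\<F> \<subseteq> Kset X \<and> (\<forall>B\<in>\<F>. \<forall>C\<in>\<F>. B \<noteq> C \<longrightarrow> eps_split \<epsilon> B C)"
    define p where "p B = (SOME x. x \<in> B)" for B :: "'a set"
    have p: "p B \<in> B" "p B \<in> X" if "B \<in> \<F>" for B
    proof -
      have "B \<noteq> {}" "B \<subseteq> X" using H that by (auto simp: Kset_def)
      then show "p B \<in> B" unfolding p_def by (simp add: some_in_eq)
      then show "p B \<in> X" using \<open>B \<subseteq> X\<close> by auto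
    qed
    define c where "c B = (SOME f. f \<in> F \<and> p B \<in> ball f (\<epsilon>/2))" for B
    have c: "c B \<in> F \<and> p B \<in> ball (c B) (\<epsilon>/2)" if "B \<in> \<F>" for B
    proof -
      have "p B \<in> (\<Union>f\<in>F. ball f (\<epsilon>/2))" using F(3) p(2)[OF that] by blast
      then have "\<exists>f. f \<in> F \<and> p B \<in> ball f (\<epsilon>/2)" by blast
      then show ?thesis unfolding c_def by (rule someI_ex)
    qed
    have inj: "inj_on c \<F>"
    proof (rule inj_onI, rule ccontr)
      fix B C assume BC: "B \<in> \<F>" "C \<in> \<F>" "c B = c C" "B \<noteq> C"
      have "dist (p B) (p C) \<le> dist (p B) (c B) + dist (c C) (p C)"
        using BC(3) dist_triangle dist_commute by metis
      also have "\<dots> < \<epsilon>" using c[OF BC(1)] c[OF BC(2)] by (simp add: dist_commute)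
      finally have "setdist B C < \<epsilon>"
        using setdist_le_dist[OF p(1)[OF BC(1)] p(1)[OF BC(2)]] by linarith
      moreover have "eps_split \<epsilon> B C" using H BC by blast
      ultimately show False by (simp add: eps_split_def)
    qed
    have sub: "c ` \<F> \<subseteq> F" using c by auto
    have "finite \<F>" using inj sub F(1) finite_imageD finite_subset by blast
    moreover have "card \<F> \<le> card F" using card_inj_on_le[OF inj sub F(1)] .
    ultimately show "finite \<F> \<and> card \<F> \<le> card F" by simp
  qed
qed

lemma split_number_props:
  fixes X :: "'a::metric_space set"
  assumes "compact X" "\<A> \<subseteq> Kset X" "\<A> \<noteq> {}" "\<epsilon> > 0"
  shows "split_number \<A> \<epsilon> \<ge> 1 \<and> (\<exists>\<F>. finite \<F> \<and> \<F> \<subseteq> \<A> \<and>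
      (\<forall>B\<in>\<F>. \<forall>C\<in>\<F>. B \<noteq> C \<longrightarrow> eps_split \<epsilon> B C) \<and> card \<F> = split_number \<A> \<epsilon>)"
proof -
  define S where "S = {card \<F> | \<F>. finite \<F> \<and> \<F> \<subseteq> \<A> \<and>
      (\<forall>B\<in>\<F>. \<forall>C\<in>\<F>. B \<noteq> C \<longrightarrow> eps_split \<epsilon> B C)}"
  from split_bound[OF assms(1,4)] obtain M where M: "\<forall>\<F>. \<F> \<subseteq> Kset X \<and> (\<forall>B\<in>\<F>. \<forall>C\<in>\<F>. B \<noteq> C \<longrightarrow> eps_split \<epsilon> B C)
            \<longrightarrow> finite \<F> \<and> card \<F> \<le> M" ..
  obtain a where a: "a \<in> \<A>" using assms(3) by auto
  have a1: "finite {a}" "{a} \<subseteq> \<A>" "\<forall>B\<in>{a}. \<forall>C\<in>{a}. B \<noteq> C \<longrightarrow> eps_split \<epsilon> B C"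
    using a by auto
  have "card {a} \<in> S" unfolding S_def using a1 by blast
  then have "1 \<in> S" by simp
  have bdd: "bdd_above S"
  proof (rule bdd_aboveI)
    fix k assume "k \<in> S"
    then have "\<exists>\<F>. k = card \<F> \<and> finite \<F> \<and> \<F> \<subseteq> \<A> \<and>
      (\<forall>B\<in>\<F>. \<forall>C\<in>\<F>. B \<noteq> C \<longrightarrow> eps_split \<epsilon> B C)" unfolding S_def by (simp only: mem_Collect_eq)
    then obtain \<F> where FF: "k = card \<F> \<and> finite \<F> \<and> \<F> \<subseteq> \<A> \<and>
      (\<forall>B\<in>\<F>. \<forall>C\<in>\<F>. B \<noteq> C \<longrightarrow> eps_split \<epsilon> B C)" ..
    have F: "k = card \<F>" "\<F> \<subseteq> \<A>"
      "\<forall>B\<in>\<F>. \<forall>C\<in>\<F>. B \<noteq> C \<longrightarrow> eps_split \<epsilon> B C"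
      using FF by blast+
    have "\<F> \<subseteq> Kset X" using F(2) assms(2) by (rule order_trans)
    then have "finite \<F> \<and> card \<F> \<le> M" using M[rule_format, OF conjI[OF _ F(3)]] by blast
    then show "k \<le> M" using F(1) by simp
  qed
  have sn: "split_number \<A> \<epsilon> = Sup S" unfolding split_number_def S_def by simp
  have fin: "finite S" using bdd bdd_above_nat by blast
  have ne: "S \<noteq> {}" using \<open>1 \<in> S\<close> by blast
  have "Sup S = Max S" by (rule cSup_eq_Max[OF fin ne])
  then have mem: "Sup S \<in> S" using Max_in[OF fin ne] by simp
  have one: "1 \<le> Sup S" using cSup_upper[OF \<open>1 \<in> S\<close> bdd] .
  have "\<exists>\<F>. Sup S = card \<F> \<and> finite \<F> \<and> \<F> \<subseteq> \<A> \<and>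
      (\<forall>B\<in>\<F>. \<forall>C\<in>\<F>. B \<noteq> C \<longrightarrow> eps_split \<epsilon> B C)"
    using mem unfolding S_def by (simp only: mem_Collect_eq)
  then obtain \<F> where FF: "Sup S = card \<F> \<and> finite \<F> \<and> \<F> \<subseteq> \<A> \<and>
      (\<forall>B\<in>\<F>. \<forall>C\<in>\<F>. B \<noteq> C \<longrightarrow> eps_split \<epsilon> B C)" ..
  have F: "Sup S = card \<F>" "finite \<F>" "\<F> \<subseteq> \<A>"
      "\<forall>B\<in>\<F>. \<forall>C\<in>\<F>. B \<noteq> C \<longrightarrow> eps_split \<epsilon> B C"
      using FF by blast+
  have "1 \<le> split_number \<A> \<epsilon>" using one sn by simp
  moreover have "card \<F> = split_number \<A> \<epsilon>" using F(1) sn by simp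
  ultimately show ?thesis using F(2,3,4) by (intro conjI exI[of _ \<F>])
qed

lemma union_in:
  assumes "finite_union_property \<A>" "finite S" "S \<noteq> {}" "S \<subseteq> \<A>"
  shows "\<Union>S \<in> \<A>"
  using assms(2,3,4)
proof (induction S rule: finite_ne_induct)
  case (singleton x) then show ?case by auto
next
  case (insert x F)
  have "x \<in> \<A>" "F \<subseteq> \<A>" using insert.prems by auto
  then have "x \<in> \<A>" "\<Union>F \<in> \<A>" using insert.IH by auto
  then have "x \<union> \<Union>F \<in> \<A>" using assms(1) unfolding finite_union_property_def by blast
  then show ?case by simp
qed

lemma hd_sym: "hausdorff_dist S T = hausdorff_dist T S"
  unfolding hausdorff_dist_def by (simp add: max.commute)

lemma hd_upper:
  fixes S T :: "'a::metric_space set"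
  assumes "bounded S" "x \<in> S" "T \<noteq> {}"
  shows "infdist x T \<le> hausdorff_dist S T"
proof -
  obtain a r where ar: "\<And>y. y \<in> S \<Longrightarrow> dist a y \<le> r" using assms(1) unfolding bounded_def by blast
  obtain t where t: "t \<in> T" using assms(3) by auto
  have "bdd_above ((\<lambda>x. infdist x T) ` S)"
  proof (rule bdd_aboveI2)
    fix y assume "y \<in> S"
    have "infdist y T \<le> dist y t" using infdist_le[OF t] .
    also have "\<dots> \<le> dist a y + dist a t" by (simp add: dist_triangle3)
    also have "\<dots> \<le> r + dist a t" using ar[OF \<open>y \<in> S\<close>] by simp
    finally show "infdist y T \<le> r + dist a t" .
  qed
  then have "infdist x T \<le> (SUP x\<in>S. infdist x T)" using assms(2) by (rule cSUP_upper2) simp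
  then show ?thesis unfolding hausdorff_dist_def by simp
qed

lemma hd_two:
  fixes S T C :: "'a::metric_space set"
  assumes "bounded S" "bounded T" "bounded C" "S \<noteq> {}" "T \<noteq> {}" "C \<noteq> {}"
    and "hausdorff_dist S C \<le> e" "hausdorff_dist T C \<le> e" "x \<in> S"
  shows "infdist x T \<le> 2 * e"
proof (rule ccontr)
  assume nt: "\<not> infdist x T \<le> 2 * e"
  define d where "d = (infdist x T - 2 * e) / 2"
  have d: "d > 0" using nt unfolding d_def by simp
  have "infdist x C \<le> e" using hd_upper[OF assms(1,9,6)] assms(7) by simp
  then have h: "setdist {x} C < e + d" using d by (simp add: infdist_eq_setdist)
  have xne: "{x} \<noteq> {}" by simp
  obtain x' c where "x' \<in> {x}" "c \<in> C" "dist x' c < e + d"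
    using setdist_ltE[OF h xne assms(6)] by blast
  then have c: "c \<in> C" "dist x c < e + d" by auto
  have "infdist c T \<le> hausdorff_dist C T" using hd_upper[OF assms(3) c(1) assms(5)] .
  also have "\<dots> = hausdorff_dist T C" by (rule hd_sym)
  also have "\<dots> \<le> e" by (rule assms(8))
  finally have "infdist x T < e + (e + d)" using infdist_triangle[of x T c] c(2) by linarith
  moreover have "2 * d = infdist x T - 2 * e" by (simp add: d_def)
  ultimately show False using nt by linarith
qed

lemma cover_exists:
  fixes X :: "'a::metric_space set"
  assumes "compact X" "\<epsilon> > 0" "\<A> \<subseteq> Kset X"
  shows "\<exists>E. finite E \<and> E \<subseteq> Kset X \<and> \<A> \<subseteq> (\<Union>C\<in>E. {S. hausdorff_dist S C \<le> \<epsilon>})"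
proof -
  obtain F where F: "finite F" "F \<subseteq> X" "X \<subseteq> (\<Union>f\<in>F. ball f \<epsilon>)"
    using net_exists[OF assms(1,2)] by blast
  define c where "c S = {f\<in>F. \<exists>s\<in>S. dist f s < \<epsilon>}" for S
  have inK: "S \<in> Kset X" if "S \<in> \<A>" for S using that assms(3) by blast
  have cov: "\<exists>f\<in>c S. dist x f < \<epsilon>" if "x \<in> S" "S \<in> \<A>" for x S
  proof -
    have "S \<subseteq> X" using inK[OF that(2)] by (simp add: Kset_def)
    then have "x \<in> X" using that(1) by blast
    then have "x \<in> (\<Union>f\<in>F. ball f \<epsilon>)" using F(3) by blast
    then obtain f where f: "f \<in> F" "dist f x < \<epsilon>" by auto
    then have "f \<in> c S" unfolding c_def using that(1) by blast
    moreover have "dist x f < \<epsilon>" using f(2) by (simp add: dist_commute)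
    ultimately show ?thesis by blast
  qed
  have "c ` \<A> \<subseteq> Pow F" unfolding c_def by blast
  moreover have "finite (Pow F)" using F(1) by simp
  ultimately have fin: "finite (c ` \<A>)" by (rule finite_subset)
  have sub: "c ` \<A> \<subseteq> Kset X"
  proof
    fix C assume "C \<in> c ` \<A>"
    then obtain S where S: "S \<in> \<A>" "C = c S" by blast
    have "S \<noteq> {}" using inK[OF S(1)] by (simp add: Kset_def)
    then obtain s where s: "s \<in> S" by blast
    have "C \<noteq> {}" using cov[OF s S(1)] S(2) by blast
    moreover have "C \<subseteq> F" unfolding S(2) c_def by blast
    moreover then have "finite C" using F(1) finite_subset by blast
    ultimately show "C \<in> Kset X" unfolding Kset_def using F(2) finite_imp_closed by blast
  qed
  have "\<A> \<subseteq> (\<Union>C\<in>c ` \<A>. {S. hausdorff_dist S C \<le> \<epsilon>})"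
  proof
    fix S assume S: "S \<in> \<A>"
    have ne: "S \<noteq> {}" using inK[OF S] by (simp add: Kset_def)
    have "c S \<in> Kset X" using sub S by blast
    then have ne2: "c S \<noteq> {}" by (simp add: Kset_def)
    have "(SUP x\<in>S. infdist x (c S)) \<le> \<epsilon>"
    proof (rule cSUP_least[OF ne])
      fix x assume "x \<in> S"
      then obtain f where "f \<in> c S" "dist x f < \<epsilon>" using cov S by blast
      then show "infdist x (c S) \<le> \<epsilon>" using infdist_le[of f "c S" x] by simp
    qed
    moreover have "(SUP y\<in>c S. infdist y S) \<le> \<epsilon>"
    proof (rule cSUP_least[OF ne2])
      fix y assume "y \<in> c S"
      then obtain s where "s \<in> S" "dist y s < \<epsilon>" unfolding c_def by blast
      then show "infdist y S \<le> \<epsilon>" using infdist_le[of s S y] by simp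
    qed
    ultimately have "hausdorff_dist S (c S) \<le> \<epsilon>" unfolding hausdorff_dist_def by simp
    then show "S \<in> (\<Union>C\<in>c ` \<A>. {S. hausdorff_dist S C \<le> \<epsilon>})" using S by blast
  qed
  then show ?thesis using fin sub by blast
qed

lemma cover_lower:
  fixes X :: "'a::metric_space set"
  assumes "compact X" "finite_union_property \<A>" "\<A> \<subseteq> Kset X" "finite \<F>" "\<F> \<subseteq> \<A>"
    and sp: "\<forall>B\<in>\<F>. \<forall>C\<in>\<F>. B \<noteq> C \<longrightarrow> eps_split (2*\<epsilon>) B C"
    and E: "finite E" "E \<subseteq> Kset X" "\<A> \<subseteq> (\<Union>C\<in>E. {S. hausdorff_dist S C \<le> \<epsilon>})"
  shows "2 ^ card \<F> - 1 \<le> card E"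
proof -
  define P where "P = Pow \<F> - {{}}"
  have cardP: "card P = 2 ^ card \<F> - 1" unfolding P_def using assms(4)
    by (simp add: card_Diff_singleton card_Pow)
  have bnd: "bounded S" if "S \<subseteq> X" for S
    using compact_imp_bounded[OF assms(1)] that by (rule bounded_subset)
  have KX: "S \<subseteq> X" "S \<noteq> {}" if "S \<in> Kset X" for S using that by (simp_all add: Kset_def)
  have Pprops: "\<sigma> \<subseteq> \<F>" "\<sigma> \<noteq> {}" "finite \<sigma>" if "\<sigma> \<in> P" for \<sigma>
  proof -
    show "\<sigma> \<subseteq> \<F>" "\<sigma> \<noteq> {}" using that unfolding P_def by auto
    then show "finite \<sigma>" using assms(4) finite_subset by blast
  qed
  have FK: "B \<in> Kset X" if "B \<in> \<F>" for B using that assms(3,5) by blast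
  have UA: "\<Union>\<sigma> \<in> \<A>" if "\<sigma> \<in> P" for \<sigma>
  proof -
    have "\<sigma> \<subseteq> \<A>" using Pprops(1)[OF that] assms(5) by (rule order_trans)
    then show ?thesis using union_in[OF assms(2) Pprops(3)[OF that] Pprops(2)[OF that]] by blast
  qed
  have UX: "\<Union>\<sigma> \<subseteq> X" "\<Union>\<sigma> \<noteq> {}" if s: "\<sigma> \<in> P" for \<sigma>
  proof -
    show "\<Union>\<sigma> \<subseteq> X" using Pprops(1)[OF s] FK KX(1) by blast
    obtain B where "B \<in> \<sigma>" using Pprops(2)[OF s] by blast
    moreover then have "B \<noteq> {}" using Pprops(1)[OF s] FK KX(2) by blast
    ultimately show "\<Union>\<sigma> \<noteq> {}" by blast
  qed
  have "\<forall>\<sigma>\<in>P. \<exists>C. C \<in> E \<and> hausdorff_dist (\<Union>\<sigma>) C \<le> \<epsilon>"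
  proof
    fix \<sigma> assume "\<sigma> \<in> P"
    then have "\<Union>\<sigma> \<in> (\<Union>C\<in>E. {S. hausdorff_dist S C \<le> \<epsilon>})" using UA E(3) by blast
    then show "\<exists>C. C \<in> E \<and> hausdorff_dist (\<Union>\<sigma>) C \<le> \<epsilon>" by blast
  qed
  from bchoice[OF this] obtain g where g: "\<forall>\<sigma>\<in>P. g \<sigma> \<in> E \<and> hausdorff_dist (\<Union>\<sigma>) (g \<sigma>) \<le> \<epsilon>" ..
  have key: False if st: "\<sigma> \<in> P" "\<tau> \<in> P" "B \<in> \<sigma>" "B \<notin> \<tau>" "g \<sigma> = g \<tau>" for \<sigma> \<tau> B
  proof -
    have BF: "B \<in> \<F>" using st(1,3) Pprops(1) by blast
    obtain x where x: "x \<in> B" using KX(2)[OF FK[OF BF]] by blast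
    define \<delta> where "\<delta> = Min ((\<lambda>B'. setdist B B') ` \<tau>)"
    have fin: "finite ((\<lambda>B'. setdist B B') ` \<tau>)" using Pprops(3)[OF st(2)] by simp
    have ne: "(\<lambda>B'. setdist B B') ` \<tau> \<noteq> {}" using Pprops(2)[OF st(2)] by simp
    have "\<forall>B'\<in>\<tau>. 2*\<epsilon> < setdist B B'"
    proof
      fix B' assume "B' \<in> \<tau>"
      then have "B' \<in> \<F>" "B \<noteq> B'" using Pprops(1)[OF st(2)] st(4) by auto
      then show "2*\<epsilon> < setdist B B'" using sp BF unfolding eps_split_def by blast
    qed
    then have d: "2*\<epsilon> < \<delta>" unfolding \<delta>_def using Min_gr_iff[OF fin ne] by blast
    have "\<delta> \<le> setdist {x} (\<Union>\<tau>)"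
    proof (rule le_setdistI)
      show "{x} \<noteq> {}" by simp
      show "\<Union>\<tau> \<noteq> {}" using UX(2)[OF st(2)] .
      fix x' y assume "x' \<in> {x}" "y \<in> \<Union>\<tau>"
      then obtain B' where "B' \<in> \<tau>" "y \<in> B'" "x' = x" by blast
      have "\<delta> \<le> setdist B B'" unfolding \<delta>_def using fin \<open>B' \<in> \<tau>\<close> by simp
      also have "\<dots> \<le> dist x y" using setdist_le_dist[OF x \<open>y \<in> B'\<close>] .
      finally show "\<delta> \<le> dist x' y" using \<open>x' = x\<close> by simp
    qed
    then have i1: "2*\<epsilon> < infdist x (\<Union>\<tau>)" using d by (simp add: infdist_eq_setdist)
    have gK: "g \<sigma> \<in> Kset X" using g st(1) E(2) by blast
    have h1: "hausdorff_dist (\<Union>\<sigma>) (g \<sigma>) \<le> \<epsilon>" using g st(1) by blast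
    have h2: "hausdorff_dist (\<Union>\<tau>) (g \<sigma>) \<le> \<epsilon>" using g st(2) st(5) by simp
    have "x \<in> \<Union>\<sigma>" using x st(3) by blast
    then have "infdist x (\<Union>\<tau>) \<le> 2*\<epsilon>"
      using hd_two[OF bnd[OF UX(1)[OF st(1)]] bnd[OF UX(1)[OF st(2)]] bnd[OF KX(1)[OF gK]]
          UX(2)[OF st(1)] UX(2)[OF st(2)] KX(2)[OF gK] h1 h2] by blast
    then show False using i1 by simp
  qed
  have inj: "inj_on g P"
  proof (rule inj_onI, rule ccontr)
    fix \<sigma> \<tau> assume a: "\<sigma> \<in> P" "\<tau> \<in> P" "g \<sigma> = g \<tau>" "\<sigma> \<noteq> \<tau>"
    then have "(\<exists>B\<in>\<sigma>. B\<notin>\<tau>) \<or> (\<exists>B\<in>\<tau>. B\<notin>\<sigma>)" by blast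
    then show False
    proof
      assume "\<exists>B\<in>\<sigma>. B\<notin>\<tau>" then obtain B where "B \<in> \<sigma>" "B \<notin> \<tau>" by blast
      then show False using key[OF a(1,2) _ _ a(3)] by blast
    next
      assume "\<exists>B\<in>\<tau>. B\<notin>\<sigma>" then obtain B where "B \<in> \<tau>" "B \<notin> \<sigma>" by blast
      then show False using key[OF a(2,1) _ _ a(3)[symmetric]] by blast
    qed
  qed
  have "g ` P \<subseteq> E" using g by blast
  from card_inj_on_le[OF inj this E(1)] show ?thesis using cardP by simp
qed

lemma ln_bound:
  fixes m N :: nat
  assumes "m \<ge> 1" "2^m - 1 \<le> N"
  shows "ln (real m) + ln (ln 2 / 2) \<le> ln (ln (real N))"
proof (cases "m \<ge> 2")
  case True
  obtain k where k: "m = Suc k" using assms(1) by (cases m) auto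
  have "(1::nat) \<le> 2^k" by simp
  then have "(2::nat)^k \<le> 2^m - 1" unfolding k by simp
  then have "(2::nat)^k \<le> N" using assms(2) by linarith
  then have "real ((2::nat)^k) \<le> real N" by (rule of_nat_mono)
  then have N: "(2::real)^k \<le> real N" by simp
  have "ln ((2::real)^k) \<le> ln (real N)" using N by (intro ln_mono) auto
  then have kl: "real k * ln 2 \<le> ln (real N)" by (simp add: ln_realpow)
  have "real m / 2 \<le> real k" using True k by simp
  moreover have l2: "ln (2::real) > 0" by simp
  ultimately have "real m / 2 * ln 2 \<le> real k * ln 2" by (intro mult_right_mono) auto
  moreover have "real m * (ln 2 / 2) = real m / 2 * ln 2" by simp
  ultimately have le: "real m * (ln 2 / 2) \<le> ln (real N)" using kl by linarith
  have pos: "real m * (ln 2 / 2) > 0" using assms(1) l2 by simp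
  have "ln (real m * (ln 2 / 2)) \<le> ln (ln (real N))" using le pos by (intro ln_mono) auto
  moreover have "ln (real m * (ln 2 / 2)) = ln (real m) + ln (ln 2 / 2)"
    using pos assms(1) l2 by (intro ln_mult_pos) auto
  ultimately show ?thesis by simp
next
  case False
  then have m: "m = 1" using assms(1) by simp
  have l2: "ln (2::real) > 0" by simp
  have K: "ln (ln 2 / 2) \<le> (0::real)" using ln_2_less_1 l2 by simp
  show ?thesis
  proof (cases "N \<ge> 2")
    case True
    then have "ln 2 \<le> ln (real N)" by (intro ln_mono) auto
    then have "ln 2 / 2 \<le> ln (real N)" using l2 by linarith
    then have "ln (ln 2 / 2) \<le> ln (ln (real N))" using l2 by (intro ln_mono) auto
    then show ?thesis using m by simp
  next
    case False
    then have "N = 0 \<or> N = 1" by auto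
    then have "ln (ln (real N)) = 0" by auto
    then show ?thesis using m K by simp
  qed
qed

lemma bound_at:
  fixes X :: "'a::metric_space set"
  assumes "compact X" "\<A> \<subseteq> Kset X" "\<A> \<noteq> {}" "finite_union_property \<A>" "\<epsilon> > 0"
  shows "ln (real (split_number \<A> (2*\<epsilon>))) + ln (ln 2 / 2) \<le> ln (ln (real (covering_number X \<A> \<epsilon>)))"
proof -
  have e2: "2*\<epsilon> > 0" using assms(5) by simp
  from split_number_props[OF assms(1,2,3) e2]
  have m1: "1 \<le> split_number \<A> (2*\<epsilon>)"
    and "\<exists>\<F>. finite \<F> \<and> \<F> \<subseteq> \<A> \<and>
      (\<forall>B\<in>\<F>. \<forall>C\<in>\<F>. B \<noteq> C \<longrightarrow> eps_split (2*\<epsilon>) B C) \<and> card \<F> = split_number \<A> (2*\<epsilon>)"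
    by blast+
  then obtain \<F> where FF: "finite \<F> \<and> \<F> \<subseteq> \<A> \<and>
      (\<forall>B\<in>\<F>. \<forall>C\<in>\<F>. B \<noteq> C \<longrightarrow> eps_split (2*\<epsilon>) B C) \<and> card \<F> = split_number \<A> (2*\<epsilon>)" by blast
  have F: "finite \<F>" "\<F> \<subseteq> \<A>" "\<forall>B\<in>\<F>. \<forall>C\<in>\<F>. B \<noteq> C \<longrightarrow> eps_split (2*\<epsilon>) B C"
    "card \<F> = split_number \<A> (2*\<epsilon>)" using FF by blast+
  define Q where "Q = {card E | E. finite E \<and> E \<subseteq> Kset X \<and>
      \<A> \<subseteq> (\<Union>C\<in>E. {S. hausdorff_dist S C \<le> \<epsilon>})}"
  obtain E0 where E0: "finite E0 \<and> E0 \<subseteq> Kset X \<and> \<A> \<subseteq> (\<Union>C\<in>E0. {S. hausdorff_dist S C \<le> \<epsilon>})"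
    using cover_exists[OF assms(1,5,2)] by blast
  have "card E0 \<in> Q" unfolding Q_def using E0 by blast
  then have "Q \<noteq> {}" by blast
  then have "Inf Q \<in> Q" by (rule Inf_nat_def1)
  then have "\<exists>E. Inf Q = card E \<and> finite E \<and> E \<subseteq> Kset X \<and>
      \<A> \<subseteq> (\<Union>C\<in>E. {S. hausdorff_dist S C \<le> \<epsilon>})" unfolding Q_def by (simp only: mem_Collect_eq)
  then obtain E where EE: "Inf Q = card E \<and> finite E \<and> E \<subseteq> Kset X \<and>
      \<A> \<subseteq> (\<Union>C\<in>E. {S. hausdorff_dist S C \<le> \<epsilon>})" ..
  have E: "Inf Q = card E" "finite E" "E \<subseteq> Kset X" "\<A> \<subseteq> (\<Union>C\<in>E. {S. hausdorff_dist S C \<le> \<epsilon>})"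
    using EE by blast+
  have cn: "covering_number X \<A> \<epsilon> = Inf Q" unfolding covering_number_def Q_def by simp
  have "2 ^ card \<F> - 1 \<le> card E"
    by (rule cover_lower[OF assms(1,4,2) F(1,2,3) E(2,3,4)])
  then have "2 ^ split_number \<A> (2*\<epsilon>) - 1 \<le> covering_number X \<A> \<epsilon>" using F(4) E(1) cn by simp
  then show ?thesis by (rule ln_bound[OF m1])
qed

theorem lemma4p6:
  fixes X :: "'a::metric_space set" and \<A> :: "'a set set"
  assumes "compact X" and "\<A> \<subseteq> Kset X" and "\<A> \<noteq> {}"
    and "finite_union_property \<A>"
  shows "lower_mo X \<A> \<ge>
    Liminf (at_right 0) (\<lambda>\<epsilon>. ereal (ln (real (split_number \<A> \<epsilon>)) / (- ln \<epsilon>)))"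
proof -
  define K :: real where "K = ln (ln 2 / 2)"
  define g where "g = (\<lambda>\<epsilon>. ereal (ln (real (split_number \<A> \<epsilon>)) / (- ln \<epsilon>)))"
  define f where "f = (\<lambda>\<epsilon>. ereal (ln (ln (real (covering_number X \<A> \<epsilon>))) / (- ln \<epsilon>)))"
  have bnd: "ln (real (split_number \<A> (2*t))) + K \<le> ln (ln (real (covering_number X \<A> t)))"
    if "t > 0" for t
    using bound_at[OF assms that] unfolding K_def .
  have "Liminf (at_right 0) g \<le> Liminf (at_right 0) f"
  proof (rule le_Liminf_iff[THEN iffD2], intro allI impI)
    fix y assume y: "y < Liminf (at_right 0) g"
    show "eventually (\<lambda>x. y < f x) (at_right 0)"
    proof (cases y)
      case MInf
      then show ?thesis unfolding f_def by simp
    next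
      case PInf
      then show ?thesis using y by simp
    next
      case (real y')
      obtain z' where z': "y < z'" "z' < Liminf (at_right 0) g" using dense[OF y] by blast
      then obtain z where z: "z' = ereal z" using real by (cases z') auto
      have zy: "y' < z" using z'(1) z real by simp
      have "eventually (\<lambda>t. ereal z < g t) (at_right 0)"
        using le_Liminf_iff[THEN iffD1, OF order_refl, rule_format, of "ereal z"] z'(2) z by simp
      then obtain b where b: "b > 0" "\<And>t. t > 0 \<Longrightarrow> t < b \<Longrightarrow> ereal z < g t"
        unfolding eventually_at_right_field by auto
      define R where "R = \<bar>z * ln 2 - K\<bar> / (z - y')"
      define d where "d = min (b/2) (min (1/2) (exp (-R)))"
      have dpos: "d > 0" unfolding d_def using b(1) by simp
      show ?thesis unfolding eventually_at_right_field
      proof (intro exI[of _ d] conjI allI impI)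
        show "d > 0" by (rule dpos)
        fix t :: real assume t: "t > 0" "t < d"
        have t2: "2*t < b" "2*t < 1" "t < exp (-R)" using t unfolding d_def by auto
        have "ereal z < g (2*t)" using b(2)[of "2*t"] t(1) t2(1) by simp
        then have zl: "z < ln (real (split_number \<A> (2*t))) / (- ln (2*t))" unfolding g_def by simp
        have l2t: "ln (2*t) < 0" using t(1) t2(2) by (intro ln_less_zero) auto
        have l2: "ln (2*t) = ln 2 + ln t" using t(1) by (simp add: ln_mult_pos)
        have A1: "z * (- ln (2*t)) < ln (real (split_number \<A> (2*t)))"
        proof -
          have "- ln (2*t) > 0" using l2t by simp
          from pos_less_divide_eq[OF this] zl show ?thesis by (simp only: mult.commute)
        qed
        define L where "L = - ln t"
        have "ln t < -R" using t(1) t2(3) by (metis ln_exp ln_less_cancel_iff exp_gt_zero)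
        then have LR: "L > R" unfolding L_def by simp
        have "ln t < ln (1/2)" using t t2(2) by (intro ln_less_cancel_iff[THEN iffD2]) auto
        then have "ln t < - ln 2" by (simp add: ln_div)
        moreover have "ln (2::real) > 0" by simp
        ultimately have Lpos: "L > 0" unfolding L_def by linarith
        have "(z - y') * R = \<bar>z * ln 2 - K\<bar>" unfolding R_def using zy by simp
        then have A2: "(z - y') * R \<ge> z * ln 2 - K" by simp
        have A3: "(z - y') * L > (z - y') * R" using LR zy by (intro mult_strict_left_mono) auto
        have A4: "z * (- ln (2*t)) = z * L - z * ln 2" unfolding L_def l2 by (simp add: algebra_simps)
        have A5: "(z - y') * L = z * L - y' * L" by (simp add: algebra_simps)
        have "y' * L < ln (ln (real (covering_number X \<A> t)))"
          using A1 A2 A3 A4 A5 bnd[OF t(1)] by linarith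
        then have "y' < ln (ln (real (covering_number X \<A> t))) / L" using Lpos by (simp add: less_divide_eq)
        then show "y < f t" unfolding f_def L_def using real by simp
      qed
    qed
  qed
  then show ?thesis unfolding lower_mo_def f_def g_def .
qed

end
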